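(* Let $0\le a<b$, $1<\alpha\le 2$, and let $q:[a,b]\to\mathbb{R}$ be continuous. Suppose the fractional boundary value problem $${}^{CF}D_a^{\alpha}u(t)+q(t)u(t)=0,\quad a<t<b,\qquad u(a)=u(b)=0,$$ has a nontrivial solution. Then $$\int_a^b|q(t)|\,dt\ \ge\ \begin{cases}\dfrac{1}{2-\alpha}, & \text{if } b-a<\dfrac{2-\alpha}{\alpha-1},\\[3mm] \dfrac{4(\alpha-1)(b-a)}{[(\alpha-1)(b-a)+(2-\alpha)]^2}, & \text{if } b-a\ge\dfrac{2-\alpha}{\alpha-1}.\end{cases}$$
   Context: ${}^{CF}D_a^{\alpha}$ denotes the Caputo–Fabrizio fractional derivative of order $\alpha\in(1,2]$ with lower terminal $a$: for a twice continuously differentiable $u$ on $[a,b]$ and $1<\alpha<2$, ${}^{CF}D_a^{\alpha}u(t)=\frac{1}{2-\alpha}\int_a^t \exp\!\big(-\frac{\alpha-1}{2-\alpha}(t-s)\big)u''(s)\,ds$, and for $\alpha=2$ it is $u''(t)$. A solution means a twice continuously differentiable function $u$ on $[a,b]$ satisfying the equation and boundary conditions; nontrivial means not identically zero. (The problem is equivalent to $u(t)=\int_a^b G(t,s)q(s)u(s)\,ds$ with $G(t,s)=\frac{b-t}{b-a}[(\alpha-1)(s-a)-2+\alpha]$ for $a\le s\le t\le b$ and $G(t,s)=\frac{t-a}{b-a}[(\alpha-1)(b-s)+2-\alpha]$ for $a\le t\le s\le b$.) *)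

theory Defs
  imports "HOL-Analysis.Analysis"
begin

definition C2_on :: "real \<Rightarrow> real \<Rightarrow> (real \<Rightarrow> real) \<Rightarrow> (real \<Rightarrow> real) \<Rightarrow> (real \<Rightarrow> real) \<Rightarrow> bool" where
  "C2_on a b u u1 u2 \<longleftrightarrow>
     (\<forall>t\<in>{a..b}. (u has_real_derivative u1 t) (at t within {a..b})) \<and>
     (\<forall>t\<in>{a..b}. (u1 has_real_derivative u2 t) (at t within {a..b})) \<and>
     continuous_on {a..b} u2"

text \<open>Caputo--Fabrizio derivative of order alpha in (1,2], expressed via the second
  derivative u2 of u.\<close>
definition CF_deriv :: "real \<Rightarrow> real \<Rightarrow> (real \<Rightarrow> real) \<Rightarrow> real \<Rightarrow> real" where
  "CF_deriv \<alpha> a u2 t =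
     (if \<alpha> = 2 then u2 t
      else (1 / (2 - \<alpha>)) * integral {a..t} (\<lambda>s. exp (- ((\<alpha> - 1) / (2 - \<alpha>)) * (t - s)) * u2 s))"

end

theory Submission
  imports Defs
begin

lemma h_bound:
  fixes L \<beta> \<gamma> x :: real
  assumes "0 < L" "0 < \<beta>" "0 \<le> \<gamma>" "0 \<le> x" "x \<le> L"
  shows "x * (\<gamma> + \<beta> * (L - x)) / L \<le> (if L < \<gamma> / \<beta> then \<gamma> else (\<beta> * L + \<gamma>)^2 / (4 * \<beta> * L))"
proof (cases "L < \<gamma> / \<beta>")
  case True
  hence "\<beta> * L < \<gamma>" using assms by (simp add: field_simps)
  hence "\<beta> * x \<le> \<gamma>" using assms by (smt (verit) mult_left_mono)
  hence "0 \<le> (L - x) * (\<gamma> - \<beta> * x)" using assms by simp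
  hence "x * (\<gamma> + \<beta> * (L - x)) \<le> \<gamma> * L" by (simp add: algebra_simps)
  then show ?thesis using True assms by (simp add: divide_le_eq)
next
  case False
  have "0 \<le> (\<beta> * L + \<gamma> - 2 * \<beta> * x)^2" by simp
  also have "(\<beta> * L + \<gamma> - 2 * \<beta> * x)^2 = (\<beta> * L + \<gamma>)^2 - 4 * \<beta> * (x * (\<gamma> + \<beta> * (L - x)))"
    by (simp add: power2_eq_square algebra_simps)
  finally have "4 * \<beta> * (x * (\<gamma> + \<beta> * (L - x))) \<le> (\<beta> * L + \<gamma>)^2" by simp
  hence "L * (4 * \<beta> * (x * (\<gamma> + \<beta> * (L - x)))) \<le> L * (\<beta> * L + \<gamma>)^2"
    using assms by (intro mult_left_mono) auto
  hence "4 * \<beta> * L * (x * (\<gamma> + \<beta> * (L - x))) \<le> L * (\<beta> * L + \<gamma>)^2" by (simp add: algebra_simps)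
  then show ?thesis using False assms by (simp add: field_simps)
qed

lemma gamma_bound:
  fixes L \<beta> \<gamma> :: real
  assumes "0 < L" "0 < \<beta>" "0 \<le> \<gamma>"
  shows "\<gamma> \<le> (if L < \<gamma> / \<beta> then \<gamma> else (\<beta> * L + \<gamma>)^2 / (4 * \<beta> * L))"
proof -
  have "0 \<le> (\<beta> * L - \<gamma>)^2" by simp
  hence "4 * \<beta> * L * \<gamma> \<le> (\<beta> * L + \<gamma>)^2" by (simp add: power2_eq_square algebra_simps)
  thus ?thesis using assms by (simp add: field_simps)
qed

definition Mb :: "real \<Rightarrow> real \<Rightarrow> real \<Rightarrow> real" where
  "Mb L \<beta> \<gamma> = (if L < \<gamma> / \<beta> then \<gamma> else (\<beta> * L + \<gamma>)^2 / (4 * \<beta> * L))"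

lemma GR_bound:
  fixes L \<beta> \<gamma> x y :: real
  assumes "0 < L" "0 < \<beta>" "0 \<le> \<gamma>" "0 \<le> x" "x \<le> y" "y \<le> L"
  shows "\<bar>x / L * (\<beta> * (L - y) + \<gamma>)\<bar> \<le> Mb L \<beta> \<gamma>"
proof -
  have "0 \<le> \<beta> * (L - y) + \<gamma>" using assms by simp
  moreover have "\<beta> * (L - y) + \<gamma> \<le> \<gamma> + \<beta> * (L - x)" using assms by (simp add: algebra_simps)
  ultimately have "x * (\<beta> * (L - y) + \<gamma>) \<le> x * (\<gamma> + \<beta> * (L - x))"
    and "0 \<le> x * (\<beta> * (L - y) + \<gamma>)" using assms by (auto intro: mult_left_mono)
  hence "\<bar>x / L * (\<beta> * (L - y) + \<gamma>)\<bar> \<le> x * (\<gamma> + \<beta> * (L - x)) / L"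
    using assms by (simp add: divide_right_mono)
  also have "\<dots> \<le> Mb L \<beta> \<gamma>" unfolding Mb_def using h_bound[of L \<beta> \<gamma> x] assms by simp
  finally show ?thesis .
qed

lemma GL_bound:
  fixes L \<beta> \<gamma> x y :: real
  assumes "0 < L" "0 < \<beta>" "0 \<le> \<gamma>" "0 \<le> y" "y \<le> x" "x \<le> L"
  shows "\<bar>(L - x) / L * (\<beta> * y - \<gamma>)\<bar> \<le> Mb L \<beta> \<gamma>"
proof (cases "\<beta> * y - \<gamma> \<le> 0")
  case True
  have "(L - x) * (\<gamma> - \<beta> * y) \<le> L * \<gamma>"
    using assms True by (intro mult_mono) auto
  moreover have "0 \<le> (L - x) * (\<gamma> - \<beta> * y)" using assms True by simp
  ultimately have "\<bar>(L - x) / L * (\<beta> * y - \<gamma>)\<bar> \<le> \<gamma>"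
    using assms by (simp add: abs_mult divide_le_eq abs_of_nonneg abs_of_nonpos True algebra_simps)
  also have "\<dots> \<le> Mb L \<beta> \<gamma>" unfolding Mb_def using gamma_bound[of L \<beta> \<gamma>] assms by simp
  finally show ?thesis .
next
  case False
  have "(L - x) * (\<beta> * y - \<gamma>) \<le> x * (\<gamma> + \<beta> * (L - x))"
  proof -
    have "(L - x) * (\<beta> * y - \<gamma>) \<le> (L - x) * (\<beta> * x)"
    proof (rule mult_left_mono)
      have "\<beta> * y \<le> \<beta> * x" using assms by (simp add: mult_left_mono)
      thus "\<beta> * y - \<gamma> \<le> \<beta> * x" using assms by linarith
    qed (use assms in auto)
    also have "\<dots> \<le> x * (\<gamma> + \<beta> * (L - x))" using assms by (simp add: algebra_simps)
    finally show ?thesis .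
  qed
  moreover have "0 \<le> (L - x) * (\<beta> * y - \<gamma>)" using assms False by simp
  ultimately have "\<bar>(L - x) / L * (\<beta> * y - \<gamma>)\<bar> \<le> x * (\<gamma> + \<beta> * (L - x)) / L"
    using assms by (simp add: divide_right_mono)
  also have "\<dots> \<le> Mb L \<beta> \<gamma>" unfolding Mb_def using h_bound[of L \<beta> \<gamma> x] assms by simp
  finally show ?thesis .
qed

lemma zero_const:
  fixes f :: "real \<Rightarrow> real"
  assumes "continuous_on {a..b} f" "f a = 0"
    "\<And>x. x \<in> {a<..<b} \<Longrightarrow> (f has_real_derivative 0) (at x within {a..b})" "x \<in> {a..b}"
  shows "f x = 0"
proof (rule has_derivative_zero_unique_strong_interval[of "{a,b}" a b f 0 x])
  fix y assume "y \<in> {a..b} - {a,b}"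
  hence "y \<in> {a<..<b}" by auto
  from assms(3)[OF this] show "(f has_derivative (\<lambda>h. 0)) (at y within {a..b})"
    by (simp add: has_field_derivative_def lambda_zero)
qed (use assms in auto)

lemma lin_int:
  fixes w :: "real \<Rightarrow> real"
  assumes "(w has_integral P) S" "((\<lambda>s. s * w s) has_integral Q) S"
  shows "((\<lambda>s. (c1 * s + c2) * w s) has_integral (c1 * Q + c2 * P)) S"
proof -
  have "((\<lambda>s. c1 * (s * w s) + c2 * w s) has_integral (c1 * Q + c2 * P)) S"
    using assms by (intro has_integral_add has_integral_mult_right)
  thus ?thesis by (simp add: algebra_simps)
qed

lemma alg_id:
  fixes r r' t a b u X \<beta> \<gamma> Pt St Pb Sb :: real
  assumes "r = 1 - r'" "t = r * a + r' * b" "X = \<gamma> * Pb + \<beta> * (b * Pb - Sb)"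
    "u = r' * X - \<gamma> * Pt - \<beta> * (t * Pt - St)"
  shows "u = ((r * \<beta>) * St + (r * (- \<beta> * a - \<gamma>)) * Pt)
           + ((- r' * \<beta>) * (Sb - St) + (r' * (\<beta> * b + \<gamma>)) * (Pb - Pt))"
proof -
  have "u = r' * X - \<gamma> * Pt - \<beta> * (t * Pt - St)" by (rule assms(4))
  also have "\<dots> = ((r * \<beta>) * St + (r * (- \<beta> * a - \<gamma>)) * Pt)
           + ((- r' * \<beta>) * (Sb - St) + (r' * (\<beta> * b + \<gamma>)) * (Pb - Pt))"
    unfolding assms(2,3) unfolding assms(1) by (simp add: algebra_simps)
  finally show ?thesis .
qed

theorem theorem2:
  fixes a b \<alpha> :: real and q :: "real \<Rightarrow> real"
  assumes "0 \<le> a" and "a < b" and "1 < \<alpha>" and "\<alpha> \<le> 2"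
    and "continuous_on {a..b} q"
    and "\<exists>u u1 u2. C2_on a b u u1 u2 \<and>
           (\<forall>t\<in>{a<..<b}. CF_deriv \<alpha> a u2 t + q t * u t = 0) \<and>
           u a = 0 \<and> u b = 0 \<and> (\<exists>t\<in>{a..b}. u t \<noteq> 0)"
  shows "integral {a..b} (\<lambda>t. \<bar>q t\<bar>) \<ge>
           (if b - a < (2 - \<alpha>) / (\<alpha> - 1) then 1 / (2 - \<alpha>)
            else 4 * (\<alpha> - 1) * (b - a) / ((\<alpha> - 1) * (b - a) + (2 - \<alpha>))^2)"
proof -
  obtain u u1 u2 where C2: "C2_on a b u u1 u2"
    and eq: "\<And>t. t \<in> {a<..<b} \<Longrightarrow> CF_deriv \<alpha> a u2 t + q t * u t = 0"
    and ua: "u a = 0" and ub: "u b = 0" and nz: "\<exists>t\<in>{a..b}. u t \<noteq> 0"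
    using assms(6) by blast
  have du: "\<And>t. t \<in> {a..b} \<Longrightarrow> (u has_real_derivative u1 t) (at t within {a..b})"
    and du1: "\<And>t. t \<in> {a..b} \<Longrightarrow> (u1 has_real_derivative u2 t) (at t within {a..b})"
    and cu2: "continuous_on {a..b} u2"
    using C2 unfolding C2_on_def by auto
  have cu: "continuous_on {a..b} u" using du by (rule DERIV_continuous_on)
  have cu1: "continuous_on {a..b} u1" using du1 by (rule DERIV_continuous_on)
  define w where "w s = q s * u s" for s
  have cw: "continuous_on {a..b} w" unfolding w_def
    using assms(5) cu by (intro continuous_intros)
  have csw: "continuous_on {a..b} (\<lambda>s. s * w s)" using cw by (intro continuous_intros)
  define P where "P t = integral {a..t} w" for t
  define S where "S t = integral {a..t} (\<lambda>s. s * w s)" for t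
  have dP: "\<And>t. t \<in> {a..b} \<Longrightarrow> (P has_real_derivative w t) (at t within {a..b})"
    unfolding P_def using cw by (rule integral_has_real_derivative)
  have dS: "\<And>t. t \<in> {a..b} \<Longrightarrow> (S has_real_derivative t * w t) (at t within {a..b})"
    unfolding S_def using csw by (rule integral_has_real_derivative)
  have cP: "continuous_on {a..b} P" using dP by (rule DERIV_continuous_on)
  have cS: "continuous_on {a..b} S" using dS by (rule DERIV_continuous_on)
  have Pa: "P a = 0" and Sa: "S a = 0" unfolding P_def S_def by simp_all
  have A: "u1 t = u1 a - (2 - \<alpha>) * w t - (\<alpha> - 1) * P t" if t: "t \<in> {a<..<b}" for t
  proof (cases "\<alpha> = 2")
    case True
    define f where "f t = u1 t - u1 a + P t" for t
    have "f t = 0"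
    proof (rule zero_const[of a b f])
      show "continuous_on {a..b} f" unfolding f_def using cu1 cP by (intro continuous_intros)
      show "f a = 0" unfolding f_def using Pa by simp
      fix x assume x: "x \<in> {a<..<b}"
      hence xx: "x \<in> {a..b}" by auto
      have "(f has_real_derivative (u2 x - 0 + w x)) (at x within {a..b})"
        unfolding f_def by (intro derivative_intros du1[OF xx] dP[OF xx])
      moreover have "u2 x + w x = 0" using eq[OF x] True unfolding CF_deriv_def w_def by simp
      ultimately show "(f has_real_derivative 0) (at x within {a..b})" by simp
    qed (use t in auto)
    thus ?thesis unfolding f_def using True by simp
  next
    case False
    hence a2: "\<alpha> < 2" using assms by simp
    define k where "k = (\<alpha> - 1) / (2 - \<alpha>)"
    have k2: "k * (2 - \<alpha>) = \<alpha> - 1" unfolding k_def using a2 by simp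
    define E where "E t = integral {a..t} (\<lambda>s. exp (k * s) * u2 s)" for t
    have cE': "continuous_on {a..b} (\<lambda>s. exp (k * s) * u2 s)" using cu2 by (intro continuous_intros)
    have dE: "\<And>t. t \<in> {a..b} \<Longrightarrow> (E has_real_derivative exp (k * t) * u2 t) (at t within {a..b})"
      unfolding E_def using cE' by (rule integral_has_real_derivative)
    have cE: "continuous_on {a..b} E" using dE by (rule DERIV_continuous_on)
    define g where "g t = exp (- (k * t)) * E t" for t
    have CFg: "CF_deriv \<alpha> a u2 x = g x / (2 - \<alpha>)" for x
    proof -
      have "(\<lambda>s. exp (- ((\<alpha> - 1) / (2 - \<alpha>)) * (x - s)) * u2 s)
            = (\<lambda>s. exp (- (k * x)) * (exp (k * s) * u2 s))"
        unfolding k_def[symmetric] by (rule ext) (simp add: mult_exp_exp algebra_simps)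
      thus ?thesis unfolding CF_deriv_def g_def E_def using False by simp
    qed
    define f where "f t = u1 t - u1 a - g t + (\<alpha> - 1) * P t" for t
    have "f t = 0"
    proof (rule zero_const[of a b f])
      show "continuous_on {a..b} f" unfolding f_def g_def using cu1 cP cE by (intro continuous_intros)
      show "f a = 0" unfolding f_def g_def E_def using Pa by simp
      fix x assume x: "x \<in> {a<..<b}"
      hence xx: "x \<in> {a..b}" by auto
      have dexp: "((\<lambda>t. exp (- (k * t))) has_real_derivative exp (- (k * x)) * (- k)) (at x within {a..b})"
        by (auto intro!: derivative_eq_intros)
      have dg: "(g has_real_derivative exp (- (k * x)) * (exp (k * x) * u2 x) + exp (- (k * x)) * (- k) * E x) (at x within {a..b})"
        unfolding g_def using DERIV_mult'[OF dexp dE[OF xx]] by simp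
      have "(f has_real_derivative (u2 x - 0 - (exp (- (k * x)) * (exp (k * x) * u2 x) + exp (- (k * x)) * (- k) * E x) + (\<alpha> - 1) * w x)) (at x within {a..b})"
        unfolding f_def by (intro DERIV_add DERIV_diff DERIV_cmult du1[OF xx] DERIV_const dg dP[OF xx])
      moreover have "g x = - (2 - \<alpha>) * w x" using eq[OF x] CFg[of x] a2 unfolding w_def
        by (simp add: field_simps)
      moreover have "exp (- (k * x)) * exp (k * x) = 1" by (simp add: mult_exp_exp)
      ultimately have "(f has_real_derivative (k * g x + (\<alpha> - 1) * w x)) (at x within {a..b})"
        unfolding g_def by (simp add: algebra_simps)
      moreover have "k * g x + (\<alpha> - 1) * w x = 0"
      proof -
        have "k * g x = k * (- (2 - \<alpha>) * w x)" using \<open>g x = - (2 - \<alpha>) * w x\<close> by (rule arg_cong)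
        also have "\<dots> = - (k * (2 - \<alpha>)) * w x" by (simp add: algebra_simps)
        finally have "k * g x = - (k * (2 - \<alpha>)) * w x" .
        hence "k * g x = (1 - \<alpha>) * w x" using k2 by simp
        hence "k * g x + (\<alpha> - 1) * w x = (1 - \<alpha>) * w x + (\<alpha> - 1) * w x" by simp
        also have "\<dots> = 0" by (simp add: algebra_simps)
        finally show ?thesis .
      qed
      ultimately show "(f has_real_derivative 0) (at x within {a..b})" by simp
    qed (use t in auto)
    moreover have "g t = - (2 - \<alpha>) * w t" using eq[OF t] CFg[of t] a2 unfolding w_def
      by (simp add: field_simps)
    ultimately show ?thesis unfolding f_def by (simp add: algebra_simps)
  qed
  have B: "u t = u1 a * (t - a) - (2 - \<alpha>) * P t - (\<alpha> - 1) * (t * P t - S t)" if t: "t \<in> {a..b}" for t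
  proof -
    define f where "f t = u t - (u1 a * (t - a) - (2 - \<alpha>) * P t - (\<alpha> - 1) * (t * P t - S t))" for t
    have "f t = 0"
    proof (rule zero_const[of a b f])
      show "continuous_on {a..b} f" unfolding f_def using cu cP cS by (intro continuous_intros)
      show "f a = 0" unfolding f_def using Pa Sa ua by simp
      fix x assume x: "x \<in> {a<..<b}"
      hence xx: "x \<in> {a..b}" by auto
      have dt: "((\<lambda>t. t - a) has_real_derivative 1) (at x within {a..b})"
        by (auto intro!: derivative_eq_intros)
      have dtP: "((\<lambda>t. t * P t) has_real_derivative x * w x + 1 * P x) (at x within {a..b})"
        using DERIV_mult'[OF DERIV_ident dP[OF xx]] by simp
      have "(f has_real_derivative (u1 x - (u1 a * 1 - (2 - \<alpha>) * w x - (\<alpha> - 1) * ((x * w x + 1 * P x) - x * w x)))) (at x within {a..b})"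
        unfolding f_def by (intro DERIV_diff DERIV_cmult du[OF xx] dt dP[OF xx] dS[OF xx] dtP)
      thus "(f has_real_derivative 0) (at x within {a..b})" using A[OF x] by simp
    qed (use t in auto)
    thus ?thesis unfolding f_def by simp
  qed
  have C: "u1 a * (b - a) = (2 - \<alpha>) * P b + (\<alpha> - 1) * (b * P b - S b)"
    using B[of b] ub assms(2) by simp
  define M where "M = Mb (b - a) (\<alpha> - 1) (2 - \<alpha>)"
  have iw: "w integrable_on {a..b}" using cw by (rule integrable_continuous_real)
  have isw: "(\<lambda>s. s * w s) integrable_on {a..b}" using csw by (rule integrable_continuous_real)
  have caw: "continuous_on {a..b} (\<lambda>s. \<bar>w s\<bar>)" using cw by (intro continuous_intros)
  have iaw: "(\<lambda>s. \<bar>w s\<bar>) integrable_on {a..b}" using caw by (rule integrable_continuous_real)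
  have E: "\<bar>u t\<bar> \<le> M * integral {a..b} (\<lambda>s. \<bar>w s\<bar>)" if t: "t \<in> {a..b}" for t
  proof -
    have at: "a \<le> t" "t \<le> b" using t by auto
    have sub1: "{a..t} \<subseteq> {a..b}" and sub2: "{t..b} \<subseteq> {a..b}" using at by auto
    define r where "r = (b - t) / (b - a)"
    define r' where "r' = (t - a) / (b - a)"
    have rr: "r = 1 - r'" unfolding r_def r'_def using assms(2) by (simp add: field_simps)
    have tr: "t = r * a + r' * b"
    proof -
      have "r * a + r' * b = ((b - t) * a + (t - a) * b) / (b - a)"
        unfolding r_def r'_def by (simp add: add_divide_distrib)
      also have "(b - t) * a + (t - a) * b = t * (b - a)" by (simp add: algebra_simps)
      finally show ?thesis using assms(2) by simp
    qed
    have C': "u1 a * (t - a) = r' * ((2 - \<alpha>) * P b + (\<alpha> - 1) * (b * P b - S b))"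
      unfolding C[symmetric] r'_def using assms(2) by simp
    have ueq: "u t = ((r * (\<alpha> - 1)) * S t + (r * (- (\<alpha> - 1) * a - (2 - \<alpha>))) * P t)
           + ((- r' * (\<alpha> - 1)) * (S b - S t) + (r' * ((\<alpha> - 1) * b + (2 - \<alpha>))) * (P b - P t))"
      by (rule alg_id[OF rr tr refl]) (use B[OF t] C' in simp)
    have hw1: "(w has_integral P t) {a..t}" unfolding P_def
      using integrable_subinterval_real[OF iw sub1] by (rule integrable_integral)
    have hsw1: "((\<lambda>s. s * w s) has_integral S t) {a..t}" unfolding S_def
      using integrable_subinterval_real[OF isw sub1] by (rule integrable_integral)
    have hw2: "(w has_integral (P b - P t)) {t..b}"
    proof -
      have "integral {t..b} w = P b - P t" unfolding P_def using Henstock_Kurzweil_Integration.integral_combine[OF at iw] by simp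
      thus ?thesis using integrable_integral[OF integrable_subinterval_real[OF iw sub2]] by simp
    qed
    have hsw2: "((\<lambda>s. s * w s) has_integral (S b - S t)) {t..b}"
    proof -
      have "integral {t..b} (\<lambda>s. s * w s) = S b - S t" unfolding S_def using Henstock_Kurzweil_Integration.integral_combine[OF at isw] by simp
      thus ?thesis using integrable_integral[OF integrable_subinterval_real[OF isw sub2]] by simp
    qed
    define cL1 where "cL1 = r * (\<alpha> - 1)"
    define cL2 where "cL2 = r * (- (\<alpha> - 1) * a - (2 - \<alpha>))"
    define cR1 where "cR1 = - r' * (\<alpha> - 1)"
    define cR2 where "cR2 = r' * ((\<alpha> - 1) * b + (2 - \<alpha>))"
    have hL: "((\<lambda>s. (cL1 * s + cL2) * w s) has_integral (cL1 * S t + cL2 * P t)) {a..t}"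
      by (rule lin_int[OF hw1 hsw1])
    have hR: "((\<lambda>s. (cR1 * s + cR2) * w s) has_integral (cR1 * (S b - S t) + cR2 * (P b - P t))) {t..b}"
      by (rule lin_int[OF hw2 hsw2])
    have ueq2: "u t = integral {a..t} (\<lambda>s. (cL1 * s + cL2) * w s) + integral {t..b} (\<lambda>s. (cR1 * s + cR2) * w s)"
      using ueq integral_unique[OF hL] integral_unique[OF hR] unfolding cL1_def cL2_def cR1_def cR2_def by simp
    have L0: "0 < b - a" "0 < \<alpha> - 1" "0 \<le> 2 - \<alpha>" using assms by auto
    have bL: "\<bar>(cL1 * s + cL2) * w s\<bar> \<le> M * \<bar>w s\<bar>" if s: "s \<in> {a..t}" for s
    proof -
      have "cL1 * s + cL2 = r * ((\<alpha> - 1) * (s - a) - (2 - \<alpha>))" unfolding cL1_def cL2_def by (simp add: algebra_simps)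
      also have "r = (b - a - (t - a)) / (b - a)" unfolding r_def by simp
      finally have "\<bar>cL1 * s + cL2\<bar> \<le> M" unfolding M_def
        using GL_bound[OF L0, of "s - a" "t - a"] s at by simp
      thus ?thesis by (simp add: abs_mult mult_right_mono)
    qed
    have bR: "\<bar>(cR1 * s + cR2) * w s\<bar> \<le> M * \<bar>w s\<bar>" if s: "s \<in> {t..b}" for s
    proof -
      have "cR1 * s + cR2 = r' * ((\<alpha> - 1) * (b - s) + (2 - \<alpha>))" unfolding cR1_def cR2_def by (simp add: algebra_simps)
      also have "b - s = (b - a) - (s - a)" by simp
      also have "r' = (t - a) / (b - a)" unfolding r'_def by simp
      finally have "\<bar>cR1 * s + cR2\<bar> \<le> M" unfolding M_def
        using GR_bound[OF L0, of "t - a" "s - a"] s at by simp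
      thus ?thesis by (simp add: abs_mult mult_right_mono)
    qed
    have iaw1: "(\<lambda>s. M * \<bar>w s\<bar>) integrable_on {a..t}"
      using integrable_subinterval_real[OF iaw sub1] by (intro integrable_on_mult_right)
    have iaw2: "(\<lambda>s. M * \<bar>w s\<bar>) integrable_on {t..b}"
      using integrable_subinterval_real[OF iaw sub2] by (intro integrable_on_mult_right)
    have n1: "\<bar>integral {a..t} (\<lambda>s. (cL1 * s + cL2) * w s)\<bar> \<le> integral {a..t} (\<lambda>s. M * \<bar>w s\<bar>)"
      using integral_norm_bound_integral[OF has_integral_integrable[OF hL] iaw1] bL by simp
    have n2: "\<bar>integral {t..b} (\<lambda>s. (cR1 * s + cR2) * w s)\<bar> \<le> integral {t..b} (\<lambda>s. M * \<bar>w s\<bar>)"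
      using integral_norm_bound_integral[OF has_integral_integrable[OF hR] iaw2] bR by simp
    have "integral {a..t} (\<lambda>s. \<bar>w s\<bar>) + integral {t..b} (\<lambda>s. \<bar>w s\<bar>) = integral {a..b} (\<lambda>s. \<bar>w s\<bar>)"
      using Henstock_Kurzweil_Integration.integral_combine[OF at iaw] .
    hence "integral {a..t} (\<lambda>s. M * \<bar>w s\<bar>) + integral {t..b} (\<lambda>s. M * \<bar>w s\<bar>) = M * integral {a..b} (\<lambda>s. \<bar>w s\<bar>)"
      by (simp add: distrib_left[symmetric])
    thus ?thesis using ueq2 n1 n2 by linarith
  qed
  obtain t0 where t0: "t0 \<in> {a..b}" and t0max: "\<And>y. y \<in> {a..b} \<Longrightarrow> \<bar>u y\<bar> \<le> \<bar>u t0\<bar>"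
  proof -
    have "continuous_on {a..b} (\<lambda>t. \<bar>u t\<bar>)" using cu by (intro continuous_intros)
    hence "\<exists>x\<in>{a..b}. \<forall>y\<in>{a..b}. \<bar>u y\<bar> \<le> \<bar>u x\<bar>"
      using continuous_attains_sup[of "{a..b}" "\<lambda>t. \<bar>u t\<bar>"] assms(2) by simp
    thus ?thesis using that by blast
  qed
  define N where "N = \<bar>u t0\<bar>"
  have Npos: "0 < N" using nz t0max unfolding N_def by force
  define I where "I = integral {a..b} (\<lambda>t. \<bar>q t\<bar>)"
  have iq: "(\<lambda>t. \<bar>q t\<bar>) integrable_on {a..b}" using assms(5)
    by (intro integrable_continuous_real continuous_intros)
  have "integral {a..b} (\<lambda>s. \<bar>w s\<bar>) \<le> integral {a..b} (\<lambda>s. N * \<bar>q s\<bar>)"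
  proof (rule integral_le[OF iaw])
    show "(\<lambda>s. N * \<bar>q s\<bar>) integrable_on {a..b}" using iq by (intro integrable_on_mult_right)
    fix s assume "s \<in> {a..b}"
    hence "\<bar>u s\<bar> \<le> N" using t0max unfolding N_def by blast
    thus "\<bar>w s\<bar> \<le> N * \<bar>q s\<bar>" unfolding w_def
      by (simp add: abs_mult) (metis abs_ge_zero mult.commute mult_left_mono)
  qed
  hence wI: "integral {a..b} (\<lambda>s. \<bar>w s\<bar>) \<le> N * I" unfolding I_def by simp
  have Mpos: "0 < M"
  proof (cases "b - a < (2 - \<alpha>) / (\<alpha> - 1)")
    case True
    hence "0 < (2 - \<alpha>) / (\<alpha> - 1)" using assms(2) by linarith
    hence "0 < 2 - \<alpha>" using assms(3) by (simp add: zero_less_divide_iff)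
    thus ?thesis unfolding M_def Mb_def using True by simp
  next
    case False
    have "0 < (\<alpha> - 1) * (b - a)" using assms by simp
    hence "0 < (\<alpha> - 1) * (b - a) + (2 - \<alpha>)" using assms(4) by linarith
    thus ?thesis unfolding M_def Mb_def using False assms by simp
  qed
  have "N \<le> M * (N * I)"
  proof -
    have "N \<le> M * integral {a..b} (\<lambda>s. \<bar>w s\<bar>)" using E[OF t0] unfolding N_def .
    also have "\<dots> \<le> M * (N * I)" using wI Mpos by (simp add: mult_left_mono)
    finally show ?thesis .
  qed
  hence "N * 1 \<le> N * (M * I)" by (simp add: algebra_simps)
  hence "1 \<le> M * I" using Npos by (simp only: mult_le_cancel_left_pos)
  hence geq: "1 / M \<le> I" using Mpos by (simp add: divide_le_eq mult.commute)
  have "(if b - a < (2 - \<alpha>) / (\<alpha> - 1) then 1 / (2 - \<alpha>)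
            else 4 * (\<alpha> - 1) * (b - a) / ((\<alpha> - 1) * (b - a) + (2 - \<alpha>))^2) = 1 / M"
    unfolding M_def Mb_def by (simp add: algebra_simps)
  thus ?thesis using geq unfolding I_def by simp
qed

end
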